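(* Let $q\ge5$ be odd. The $\mathrm{U}\Gamma$-lines (non-tangent unisecants of the twisted cubic $\mathcal{C}$ lying in an osculating plane) form one orbit under $G_q$. The subgroup of $G_q$ fixing a $\mathrm{U}\Gamma$-line has size $q-1$. For the $\mathrm{U}\Gamma$-line $\ell$ through $P_0=P(0,0,0,1)$ and $P(0,1,0,0)$, every element of the subgroup of $G_q$ fixing $\ell$ has a matrix of the form $\begin{pmatrix}1&0&0&0\\0&d&0&0\\0&0&d^2&0\\0&0&0&d^3\end{pmatrix}$, $d\in\mathbb{F}_q^*$.
   Context: $\mathrm{PG}(3,q)$ has points $P(x_0,x_1,x_2,x_3)$; $\boldsymbol{\pi}(c_0,c_1,c_2,c_3)$ is the plane $c_0x_0+c_1x_1+c_2x_2+c_3x_3=0$. For $t\in\mathbb{F}_q$ let $P_t=P(t^3,t^2,t,1)$, $P_\infty=P(1,0,0,0)$; the twisted cubic is $\mathcal{C}=\{P_t\}$. The osculating planes are $\pi_{\mathrm{osc}}(t)=\boldsymbol{\pi}(1,-3t,3t^2,-t^3)$ ($t\in\mathbb{F}_q$), $\pi_{\mathrm{osc}}(\infty)=\boldsymbol{\pi}(0,0,0,1)$. The tangent at $P_t$ ($t\in\mathbb{F}_q$) is the line through $P_t$ and $P(3t^2,2t,1,0)$; the tangent at $P_\infty$ is $x_2=x_3=0$. A $\mathrm{U}\Gamma$-line is a line meeting $\mathcal{C}$ in exactly one point, not a tangent, contained in an osculating plane. $G_q$ is the group of projectivities mapping $\mathcal{C}$ to itself; for $q\ge5$ its elements are $x\mapsto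 xM$ on row vectors, $M=\begin{pmatrix} a^3&a^2c&ac^2&c^3\\ 3a^2b&a^2d+2abc&bc^2+2acd&3c^2d\\ 3ab^2&b^2c+2abd&ad^2+2bcd&3cd^2\\ b^3&b^2d&bd^2&d^3\end{pmatrix}$, $ad-bc\ne0$, up to scalar. *)

theory Defs
  imports "HOL-Analysis.Analysis"
begin

type_synonym 'a vec4 = "'a ^ 4"
type_synonym 'a pt = "'a vec4 set"  \<comment> \<open>a point = set of nonzero multiples of a vector\<close>

definition vec4 :: "'a::zero \<Rightarrow> 'a \<Rightarrow> 'a \<Rightarrow> 'a \<Rightarrow> 'a vec4" where
  "vec4 x0 x1 x2 x3 = (\<chi> i::4. if i = 0 then x0 else if i = 1 then x1 else if i = 2 then x2 else x3)"

definition mat4 :: "'a vec4 \<Rightarrow> 'a vec4 \<Rightarrow> 'a vec4 \<Rightarrow> 'a vec4 \<Rightarrow> 'a ^ 4 ^ 4" where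
  "mat4 r0 r1 r2 r3 = (\<chi> i::4. if i = 0 then r0 else if i = 1 then r1 else if i = 2 then r2 else r3)"

definition pt :: "'a::field vec4 \<Rightarrow> 'a pt" where
  "pt v = {c *s v | c. c \<noteq> 0}"

definition points :: "'a::field pt set" where
  "points = {pt v | v. v \<noteq> 0}"

definition lin_indep2 :: "'a::field vec4 \<Rightarrow> 'a vec4 \<Rightarrow> bool" where
  "lin_indep2 u w \<longleftrightarrow> (\<forall>a b. a *s u + b *s w = 0 \<longrightarrow> a = 0 \<and> b = 0)"

definition line_through :: "'a::field vec4 \<Rightarrow> 'a vec4 \<Rightarrow> 'a pt set" where
  "line_through u w = {pt (a *s u + b *s w) | a b. a \<noteq> 0 \<or> b \<noteq> 0}"

definition lines :: "'a::field pt set set" where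
  "lines = {line_through u w | u w. lin_indep2 u w}"

definition plane :: "'a::field vec4 \<Rightarrow> 'a pt set" where
  "plane c = {pt v | v. v \<noteq> 0 \<and> (\<Sum>i\<in>UNIV. c $ i * v $ i) = 0}"

definition Pt :: "'a::field \<Rightarrow> 'a pt" where
  "Pt t = pt (vec4 (t^3) (t^2) t 1)"

definition Pinf :: "'a::field pt" where
  "Pinf = pt (vec4 1 0 0 0)"

definition cubic :: "'a::field pt set" where
  "cubic = range Pt \<union> {Pinf}"

definition osc_plane :: "'a::field \<Rightarrow> 'a pt set" where
  "osc_plane t = plane (vec4 1 (-3*t) (3*t^2) (-(t^3)))"

definition osc_plane_inf :: "'a::field pt set" where
  "osc_plane_inf = plane (vec4 0 0 0 1)"

definition osc_planes :: "'a::field pt set set" where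
  "osc_planes = range osc_plane \<union> {osc_plane_inf}"

definition tangent :: "'a::field \<Rightarrow> 'a pt set" where
  "tangent t = line_through (vec4 (t^3) (t^2) t 1) (vec4 (3*t^2) (2*t) 1 0)"

definition tangent_inf :: "'a::field pt set" where
  "tangent_inf = line_through (vec4 1 0 0 0) (vec4 0 1 0 0)"

definition tangents :: "'a::field pt set set" where
  "tangents = range tangent \<union> {tangent_inf}"

definition UGamma_lines :: "'a::field pt set set" where
  "UGamma_lines = {l \<in> lines. card (l \<inter> cubic) = 1 \<and> l \<notin> tangents \<and>
                     (\<exists>\<pi>\<in>osc_planes. l \<subseteq> \<pi>)}"

text \<open>Projectivity induced by the matrix M acting on row vectors, x \<mapsto> xM, as a map
  on (sets of) points; invariant under scaling M by a nonzero scalar.\<close>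
definition proj_map :: "'a::field ^ 4 ^ 4 \<Rightarrow> 'a pt \<Rightarrow> 'a pt" where
  "proj_map M S = {w. \<exists>v\<in>S. \<exists>c. c \<noteq> 0 \<and> w = c *s (v v* M)}"

definition cubic_mat :: "'a::field \<Rightarrow> 'a \<Rightarrow> 'a \<Rightarrow> 'a \<Rightarrow> 'a ^ 4 ^ 4" where
  "cubic_mat a b c d = mat4
     (vec4 (a^3) (a^2*c) (a*c^2) (c^3))
     (vec4 (3*a^2*b) (a^2*d + 2*a*b*c) (b*c^2 + 2*a*c*d) (3*c^2*d))
     (vec4 (3*a*b^2) (b^2*c + 2*a*b*d) (a*d^2 + 2*b*c*d) (3*c*d^2))
     (vec4 (b^3) (b^2*d) (b*d^2) (d^3))"

definition Gq :: "('a::field pt \<Rightarrow> 'a pt) set" where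
  "Gq = {proj_map (cubic_mat a b c d) | a b c d. a*d - b*c \<noteq> 0}"

definition act_line :: "('a pt \<Rightarrow> 'a pt) \<Rightarrow> 'a pt set \<Rightarrow> 'a pt set" where
  "act_line g l = g ` l"

definition stabilizer :: "'a::field pt set \<Rightarrow> ('a pt \<Rightarrow> 'a pt) set" where
  "stabilizer l = {g \<in> Gq. act_line g l = l}"

end

theory Submission
  imports Defs "HOL-Library.Disjoint_Sets"
begin


lemma four_ne [simp]: "(1::4) \<noteq> 0" "(2::4) \<noteq> 0" "(3::4) \<noteq> 0" "(2::4) \<noteq> 1" "(3::4) \<noteq> 1" "(3::4) \<noteq> 2"
  by simp_all

lemma exhaust4: "(i::4) = 0 \<or> i = 1 \<or> i = 2 \<or> i = 3"
proof -
  have "(4::4) = 0" by simp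
  then show ?thesis using exhaust_4[of i] by metis
qed

lemma vec4_nth [simp]: "vec4 a b c d $ 0 = a" "vec4 a b c d $ 1 = b" "vec4 a b c d $ 2 = c" "vec4 a b c d $ 3 = d"
  by (simp_all add: vec4_def)

lemma UNIV4: "(UNIV::4 set) = {0,1,2,3}"
  using exhaust4 by blast

lemma sum4: "sum f (UNIV::4 set) = f 0 + f 1 + f 2 + f 3"
  unfolding UNIV4 by (simp add: ac_simps)

lemma vec4_eta: "(v::'a::zero^4) = vec4 (v$0) (v$1) (v$2) (v$3)"
  apply (simp add: vec_eq_iff vec4_def)
  apply (intro allI)
  subgoal for i using exhaust4[of i] by auto
  done

lemma vec4_eq_iff: "vec4 a b c d = vec4 a' b' c' d' \<longleftrightarrow> a = a' \<and> b = b' \<and> c = c' \<and> d = (d'::'a::zero)"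
  by (metis vec4_nth)

lemma vec4_zero: "(0::'a::zero^4) = vec4 0 0 0 0"
  by (subst vec4_eta) simp

lemma vec4_eq0_iff [simp]: "vec4 a b c d = (0::'a::zero^4) \<longleftrightarrow> a = 0 \<and> b = 0 \<and> c = 0 \<and> d = 0"
  by (simp add: vec4_zero vec4_eq_iff)

lemma vec4_scale [simp]: "k *s vec4 a b c d = vec4 (k*a) (k*b) (k*c) (k*(d::'a::ring))"
  by (subst vec4_eta) simp

lemma vec4_add [simp]: "vec4 a b c d + vec4 a' b' c' d' = vec4 (a+a') (b+b') (c+c') (d+(d'::'a::ring))"
  by (subst vec4_eta) simp

lemma mat4_nth [simp]: "mat4 a b c d $ 0 = a" "mat4 a b c d $ 1 = b" "mat4 a b c d $ 2 = c" "mat4 a b c d $ 3 = d"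
  by (simp_all add: mat4_def)

lemma vmult_mat4: "(v::'a::comm_ring_1^4) v* mat4 r0 r1 r2 r3 = (v$0) *s r0 + (v$1) *s r1 + (v$2) *s r2 + (v$3) *s r3"
  by (simp add: vector_matrix_mult_def vec_eq_iff sum4)

lemma vmult_vec4_mat4 [simp]: "vec4 x0 x1 x2 x3 v* mat4 (vec4 a0 a1 a2 a3) (vec4 b0 b1 b2 b3) (vec4 c0 c1 c2 c3) (vec4 d0 d1 d2 (d3::'a::comm_ring_1))
   = vec4 (x0*a0+x1*b0+x2*c0+x3*d0) (x0*a1+x1*b1+x2*c1+x3*d1) (x0*a2+x1*b2+x2*c2+x3*d2) (x0*a3+x1*b3+x2*c3+x3*d3)"
  by (simp only: vmult_mat4 vec4_nth vec4_scale vec4_add)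

lemma matmul_row: "(A ** B) $ i = (A $ i) v* B"
  by (simp add: matrix_matrix_mult_def vector_matrix_mult_def vec_eq_iff)

lemma mat4_eta: "(M::'a^4^4) = mat4 (M$0) (M$1) (M$2) (M$3)"
  apply (simp add: vec_eq_iff mat4_def)
  apply (intro allI)
  subgoal for i using exhaust4[of i] by auto
  done

lemma mat4_mult: "mat4 r0 r1 r2 r3 ** (M::'a::comm_ring_1^4^4) = mat4 (r0 v* M) (r1 v* M) (r2 v* M) (r3 v* M)"
  by (subst mat4_eta[of "mat4 r0 r1 r2 r3 ** M"]) (simp add: matmul_row)

lemma dot4: "(\<Sum>i\<in>UNIV. vec4 c0 c1 c2 c3 $ i * vec4 x0 x1 x2 x3 $ i) = c0*x0+c1*x1+c2*x2+c3*(x3::'a::comm_ring_1)"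
  by (simp add: sum4)

definition X :: "'a::field \<Rightarrow> 'a \<Rightarrow> 'a vec4" where
  "X x y = vec4 (x^3) (x^2*y) (x*y^2) (y^3)"
definition T :: "'a::field \<Rightarrow> 'a \<Rightarrow> 'a \<Rightarrow> 'a \<Rightarrow> 'a vec4" where
  "T x y p r = vec4 (3*x^2*p) (2*x*y*p + x^2*r) (y^2*p + 2*x*y*r) (3*y^2*r)"
definition Oc :: "'a::field \<Rightarrow> 'a \<Rightarrow> 'a vec4" where
  "Oc x y = vec4 (y^3) (-3*x*y^2) (3*x^2*y) (-(x^3))"

lemma cubic_mat_rows: "cubic_mat a b c d = mat4 (X a c) (T a c b d) (T b d a c) (X b d)"
  unfolding cubic_mat_def X_def T_def by (simp add: vec4_eq_iff algebra_simps)

lemma mat4_vec4_mulv [simp]: "mat4 (vec4 a0 a1 a2 a3) (vec4 b0 b1 b2 b3) (vec4 c0 c1 c2 c3) (vec4 d0 d1 d2 (d3::'a::comm_ring_1)) *v vec4 x0 x1 x2 x3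
   = vec4 (a0*x0+a1*x1+a2*x2+a3*x3) (b0*x0+b1*x1+b2*x2+b3*x3) (c0*x0+c1*x1+c2*x2+c3*x3) (d0*x0+d1*x1+d2*x2+d3*x3)"
  apply (subst vec4_eta[of "_ *v _"])
  apply (simp add: matrix_vector_mult_def sum4)
  done

lemma X_mult: "X x y v* cubic_mat a b c d = X (a*x+b*y) (c*x+d*y)"
  unfolding cubic_mat_def X_def vmult_vec4_mat4 vec4_eq_iff by (intro conjI; algebra)

lemma T_mult: "T x y p r v* cubic_mat a b c d = T (a*x+b*y) (c*x+d*y) (a*p+b*r) (c*p+d*r)"
  unfolding cubic_mat_def T_def vmult_vec4_mat4 vec4_eq_iff by (intro conjI; algebra)

lemma Oc_mult: "cubic_mat a b c d *v Oc (a*x+b*y) (c*x+d*y) = (a*d-b*c)^3 *s Oc x y"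
  unfolding cubic_mat_def Oc_def mat4_vec4_mulv vec4_scale vec4_eq_iff by (intro conjI; algebra)

lemma cubic_mat_mult: "cubic_mat a1 b1 c1 d1 ** cubic_mat a2 b2 c2 d2 =
   cubic_mat (a1*a2+c1*b2) (b1*a2+d1*b2) (a1*c2+c1*d2) (b1*c2+d1*d2)"
  unfolding cubic_mat_rows[of a1 b1 c1 d1] mat4_mult X_mult T_mult
  unfolding cubic_mat_rows by (simp add: ac_simps)

lemma cubic_mat_diag: "v v* cubic_mat k 0 0 k = k^3 *s (v::'a::field^4)"
  apply (subst (1 2) vec4_eta[of v])
  apply (simp add: cubic_mat_def mat4_def[symmetric] vec4_eq_iff)
  apply (simp add: algebra_simps power2_eq_square power3_eq_cube)
  done



lemma pt_self: "v \<in> pt v"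
proof -
  have "v = 1 *s v \<and> (1::'a) \<noteq> 0" by simp
  thus ?thesis unfolding pt_def by blast
qed

lemma pt_eqD: "pt v = pt z \<Longrightarrow> \<exists>c. c \<noteq> 0 \<and> v = c *s z"
proof -
  assume "pt v = pt z"
  then have "v \<in> pt z" using pt_self[of v] by simp
  thus ?thesis unfolding pt_def by blast
qed

lemma pt_scale: assumes "c \<noteq> 0" shows "pt (c *s v) = pt v"
  unfolding pt_def
proof (intro set_eqI iffI)
  fix u assume "u \<in> {k *s (c *s v) |k. k \<noteq> 0}"
  then obtain k where k: "k \<noteq> 0" "u = k *s (c *s v)" by blast
  then have "u = (k*c) *s v \<and> k*c \<noteq> 0" using assms by (simp add: vector_smult_assoc)
  then show "u \<in> {k *s v |k. k \<noteq> 0}" by blast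
next
  fix u assume "u \<in> {k *s v |k. k \<noteq> 0}"
  then obtain k where k: "k \<noteq> 0" "u = k *s v" by blast
  then have "u = (k/c) *s (c *s v) \<and> k/c \<noteq> 0" using assms by (simp add: vector_smult_assoc)
  then show "u \<in> {k *s (c *s v) |k. k \<noteq> 0}" by blast
qed

lemma pt_eq_iff: "pt v = pt z \<longleftrightarrow> (\<exists>c. c \<noteq> 0 \<and> v = c *s z)"
  using pt_eqD pt_scale by metis

lemma proj_map_pt: "proj_map M (pt v) = pt (v v* M)"
  unfolding proj_map_def
proof (intro set_eqI iffI)
  fix w assume "w \<in> {w. \<exists>u\<in>pt v. \<exists>c. c \<noteq> 0 \<and> w = c *s (u v* M)}"
  then obtain u c where u: "u \<in> pt v" "c \<noteq> 0" "w = c *s (u v* M)" by blast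
  from u(1) obtain k where k: "k \<noteq> 0" "u = k *s v" unfolding pt_def by blast
  have "w = (c*k) *s (v v* M)" using u k by (simp add: scalar_vector_matrix_assoc vector_smult_assoc)
  then show "w \<in> pt (v v* M)" unfolding pt_def using u k by auto
next
  fix w assume "w \<in> pt (v v* M)"
  then obtain c where "c \<noteq> 0" "w = c *s (v v* M)" unfolding pt_def by blast
  then show "w \<in> {w. \<exists>u\<in>pt v. \<exists>c. c \<noteq> 0 \<and> w = c *s (u v* M)}" using pt_self[of v] by blast
qed

lemma proj_map_comp: "proj_map A (proj_map B S) = proj_map (B ** A) S"
  unfolding proj_map_def
proof (intro set_eqI iffI)
  fix w assume "w \<in> {w. \<exists>v\<in>{w. \<exists>v\<in>S. \<exists>c. c \<noteq> 0 \<and> w = c *s (v v* B)}. \<exists>c. c \<noteq> 0 \<and> w = c *s (v v* A)}"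
  then obtain u c v c' where "v \<in> S" "c \<noteq> 0" "c' \<noteq> 0" "u = c' *s (v v* B)" "w = c *s (u v* A)" by blast
  then have "w = (c*c') *s (v v* (B ** A)) \<and> c*c' \<noteq> 0 \<and> v \<in> S"
    by (simp add: scalar_vector_matrix_assoc vector_smult_assoc vector_matrix_mul_assoc)
  then show "w \<in> {w. \<exists>v\<in>S. \<exists>c. c \<noteq> 0 \<and> w = c *s (v v* (B ** A))}" by blast
next
  fix w assume "w \<in> {w. \<exists>v\<in>S. \<exists>c. c \<noteq> 0 \<and> w = c *s (v v* (B ** A))}"
  then obtain v c where v: "v \<in> S" "c \<noteq> 0" "w = c *s (v v* (B ** A))" by blast
  have "v v* B \<in> {w. \<exists>v\<in>S. \<exists>c. c \<noteq> 0 \<and> w = c *s (v v* B)}" using v(1)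
    by (metis (mono_tags, lifting) mem_Collect_eq one_neq_zero vector_smult_lid)
  moreover have "w = c *s ((v v* B) v* A)" using v by (simp add: vector_matrix_mul_assoc)
  ultimately show "w \<in> {w. \<exists>v\<in>{w. \<exists>v\<in>S. \<exists>c. c \<noteq> 0 \<and> w = c *s (v v* B)}. \<exists>c. c \<noteq> 0 \<and> w = c *s (v v* A)}"
    using v(2) by blast
qed

lemma proj_map_cong:
  assumes "k \<noteq> 0" "\<And>v. v v* M' = k *s (v v* M)"
  shows "proj_map M' = proj_map M"
proof
  fix S
  show "proj_map M' S = proj_map M S"
    unfolding proj_map_def
  proof (intro set_eqI iffI)
    fix w assume "w \<in> {w. \<exists>v\<in>S. \<exists>c. c \<noteq> 0 \<and> w = c *s (v v* M')}"
    then obtain v c where "v \<in> S" "c \<noteq> 0" "w = c *s (v v* M')" by blast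
    then have "v \<in> S \<and> c*k \<noteq> 0 \<and> w = (c*k) *s (v v* M)" using assms by (simp add: vector_smult_assoc)
    then show "w \<in> {w. \<exists>v\<in>S. \<exists>c. c \<noteq> 0 \<and> w = c *s (v v* M)}" by blast
  next
    fix w assume "w \<in> {w. \<exists>v\<in>S. \<exists>c. c \<noteq> 0 \<and> w = c *s (v v* M)}"
    then obtain v c where "v \<in> S" "c \<noteq> 0" "w = c *s (v v* M)" by blast
    then have "v \<in> S \<and> c/k \<noteq> 0 \<and> w = (c/k) *s (v v* M')" using assms by (simp add: vector_smult_assoc)
    then show "w \<in> {w. \<exists>v\<in>S. \<exists>c. c \<noteq> 0 \<and> w = c *s (v v* M')}" by blast
  qed
qed

definition Nm :: "'a::field pt \<Rightarrow> 'a pt" where "Nm = proj_map (mat 1)"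

lemma Nm_pt [simp]: "Nm (pt v) = pt v"
  by (simp add: Nm_def proj_map_pt)

lemma Nm_points: "l \<subseteq> range pt \<Longrightarrow> Nm ` l = l"
  by (force simp: image_iff)

lemma cm_inv_r: "cubic_mat a b c d ** cubic_mat d (-b) (-c) a = cubic_mat (a*d-b*c) 0 0 (a*d-b*c)"
proof -
  have "a*d + c*(-b) = a*d-b*c" "b*d + d*(-b) = 0" "a*(-c) + c*a = 0" "b*(-c) + d*a = a*d-b*c"
    by (simp_all add: algebra_simps)
  then show ?thesis by (simp only: cubic_mat_mult)
qed

lemma cm_inv_l: "cubic_mat d (-b) (-c) a ** cubic_mat a b c d = cubic_mat (a*d-b*c) 0 0 (a*d-b*c)"
proof -
  have "d*a + (-c)*b = a*d-b*c" "(-b)*a + a*b = 0" "d*c + (-c)*d = 0" "(-b)*c + a*d = a*d-b*c"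
    by (simp_all add: algebra_simps)
  then show ?thesis by (simp only: cubic_mat_mult)
qed

lemma proj_map_diag: "k \<noteq> 0 \<Longrightarrow> proj_map (cubic_mat k 0 0 k) = Nm"
  unfolding Nm_def by (rule proj_map_cong[where k="k^3"]) (simp_all add: cubic_mat_diag)

lemma det_mult: "(a1*a2+c1*b2) * (b1*c2+d1*d2) - (b1*a2+d1*b2) * (a1*c2+c1*d2) = (a1*d1-b1*c1)*(a2*d2-(b2::'a::field)*c2)"
  by (simp add: algebra_simps)

lemma Gq_memI: "a*d-b*c \<noteq> 0 \<Longrightarrow> proj_map (cubic_mat a b c d) \<in> Gq"
  unfolding Gq_def by blast

lemma Gq_memE:
  assumes "g \<in> Gq"
  obtains a b c d where "a*d-b*c \<noteq> 0" "g = proj_map (cubic_mat a b c d)"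
  using assms unfolding Gq_def by blast

lemma Gq_comp: assumes "g \<in> Gq" "h \<in> Gq" shows "g \<circ> h \<in> Gq"
proof -
  obtain a1 b1 c1 d1 where 1: "a1*d1-b1*c1 \<noteq> 0" "g = proj_map (cubic_mat a1 b1 c1 d1)" using assms(1) by (rule Gq_memE)
  obtain a2 b2 c2 d2 where 2: "a2*d2-b2*c2 \<noteq> 0" "h = proj_map (cubic_mat a2 b2 c2 d2)" using assms(2) by (rule Gq_memE)
  have "g \<circ> h = proj_map (cubic_mat a2 b2 c2 d2 ** cubic_mat a1 b1 c1 d1)"
    using 1 2 by (simp add: fun_eq_iff proj_map_comp)
  also have "\<dots> = proj_map (cubic_mat (a2*a1+c2*b1) (b2*a1+d2*b1) (a2*c1+c2*d1) (b2*c1+d2*d1))"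
    by (simp only: cubic_mat_mult)
  moreover have "(a2*a1+c2*b1)*(b2*c1+d2*d1) - (b2*a1+d2*b1)*(a2*c1+c2*d1) = (a2*d2-b2*c2)*(a1*d1-b1*c1)"
    by (rule det_mult)
  ultimately show ?thesis using 1 2 by (auto intro!: Gq_memI)
qed

lemma Gq_Nm: assumes "g \<in> Gq" shows "g (Nm S) = g S" "Nm (g S) = g S"
  using assms by (auto elim!: Gq_memE simp: Nm_def proj_map_comp)

lemma Gq_inv: assumes "g \<in> Gq" shows "\<exists>g'\<in>Gq. \<forall>S. g' (g S) = Nm S \<and> g (g' S) = Nm S"
proof -
  obtain a b c d where 1: "a*d-b*c \<noteq> 0" "g = proj_map (cubic_mat a b c d)" using assms by (rule Gq_memE)
  have "d*a-(-b)*(-c) \<noteq> 0" using 1 by (simp add: algebra_simps)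
  then have "proj_map (cubic_mat d (-b) (-c) a) \<in> Gq" by (rule Gq_memI)
  moreover have "\<forall>S. proj_map (cubic_mat d (-b) (-c) a) (g S) = Nm S \<and> g (proj_map (cubic_mat d (-b) (-c) a) S) = Nm S"
    using 1 by (simp add: proj_map_comp cm_inv_l cm_inv_r proj_map_diag)
  ultimately show ?thesis by blast
qed

lemma Gq_pt: assumes "g \<in> Gq" shows "\<exists>M. g = proj_map M"
  using assms by (auto elim!: Gq_memE)

lemma Gq_range_pt: assumes "g \<in> Gq" "S \<subseteq> range pt" shows "g ` S \<subseteq> range pt"
  using assms Gq_pt[OF assms(1)] by (auto simp: proj_map_pt)

lemma Gq_inj: assumes "g \<in> Gq" shows "inj_on g (range pt)"
proof (rule inj_onI)
  fix x y assume "x \<in> range pt" "y \<in> range pt" "g x = g y"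
  obtain g' where "g' \<in> Gq" "\<forall>S. g' (g S) = Nm S" using Gq_inv[OF assms] by blast
  then have "Nm x = Nm y" using \<open>g x = g y\<close> by metis
  then show "x = y" using \<open>x \<in> range pt\<close> \<open>y \<in> range pt\<close> by auto
qed



lemma Pt_X: "Pt t = pt (X t 1)" by (simp add: Pt_def X_def)
lemma Pinf_X: "Pinf = pt (X 1 0)" by (simp add: Pinf_def X_def)

lemma X_scale: "y \<noteq> 0 \<Longrightarrow> X x y = y^3 *s X (x/y) 1"
  by (simp add: X_def vec4_eq_iff field_simps power2_eq_square power3_eq_cube)
lemma X_scale0: "X x 0 = x^3 *s X 1 0" by (simp add: X_def)

lemma cubic_hom: "cubic = {pt (X x y) | x y. x \<noteq> 0 \<or> y \<noteq> 0}"
proof (intro set_eqI iffI)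
  fix P assume "P \<in> (cubic :: 'a pt set)"
  then consider t where "P = Pt t" | "P = Pinf" unfolding cubic_def by blast
  then show "P \<in> {pt (X x y) | x y. x \<noteq> 0 \<or> y \<noteq> 0}"
  proof cases
    case 1 then show ?thesis unfolding Pt_X by (intro CollectI exI[of _ t] exI[of _ 1]) simp
  next
    case 2 then show ?thesis unfolding Pinf_X by (intro CollectI exI[of _ 1] exI[of _ 0]) simp
  qed
next
  fix P assume "P \<in> {pt (X x y) | x y. x \<noteq> 0 \<or> (y::'a) \<noteq> 0}"
  then obtain x y where P: "P = pt (X x y)" "x \<noteq> 0 \<or> y \<noteq> 0" by blast
  show "P \<in> cubic"
  proof (cases "y = 0")
    case False
    have "X x y = y^3 *s X (x/y) 1" by (rule X_scale[OF False])
    then have "P = Pt (x/y)" unfolding P Pt_X using False by (simp add: pt_scale)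
    then show ?thesis unfolding cubic_def by blast
  next
    case True
    have "X x y = x^3 *s X 1 0" unfolding True by (rule X_scale0)
    then have "P = Pinf" unfolding P Pinf_X using P(2) True by (simp add: pt_scale)
    then show ?thesis unfolding cubic_def by blast
  qed
qed

lemma cubic_range_pt: "cubic \<subseteq> range pt" by (auto simp: cubic_def Pt_def Pinf_def)

lemma nz_pair: assumes "a*d-b*c \<noteq> 0" "x \<noteq> 0 \<or> y \<noteq> 0" shows "a*x+b*y \<noteq> 0 \<or> c*x+d*(y::'a::field) \<noteq> 0"
proof (rule ccontr)
  assume "\<not> ?thesis"
  then have h: "a*x+b*y = 0" "c*x+d*y = 0" by auto
  have "(a*d-b*c)*x = d*(a*x+b*y) - b*(c*x+d*y)" by (simp add: algebra_simps)
  also have "\<dots> = 0" using h by simp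
  finally have "x = 0" using assms(1) by simp
  have "(a*d-b*c)*y = a*(c*x+d*y) - c*(a*x+b*y)" by (simp add: algebra_simps)
  also have "\<dots> = 0" using h by simp
  finally have "y = 0" using assms(1) by simp
  with \<open>x = 0\<close> assms(2) show False by simp
qed

lemma Gq_cubic_sub: assumes "g \<in> Gq" shows "g ` cubic \<subseteq> cubic"
proof -
  obtain a b c d where 1: "a*d-b*c \<noteq> 0" "g = proj_map (cubic_mat a b c d)" using assms by (rule Gq_memE)
  show ?thesis
  proof
    fix Q assume "Q \<in> g ` cubic"
    then obtain x y where "Q = g (pt (X x y))" "x \<noteq> 0 \<or> y \<noteq> 0" unfolding cubic_hom by blast
    then have "Q = pt (X (a*x+b*y) (c*x+d*y))" "a*x+b*y \<noteq> 0 \<or> c*x+d*y \<noteq> 0"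
      using 1 nz_pair[OF 1(1)] by (auto simp: proj_map_pt X_mult)
    then show "Q \<in> cubic" unfolding cubic_hom by blast
  qed
qed

lemma Gq_cubic: assumes "g \<in> Gq" shows "g ` cubic = cubic"
proof
  show "g ` cubic \<subseteq> cubic" using Gq_cubic_sub[OF assms] .
  show "cubic \<subseteq> g ` cubic"
  proof
    fix P :: "'a pt" assume P: "P \<in> cubic"
    obtain g' where g': "g' \<in> Gq" "\<forall>S. g (g' S) = Nm S" using Gq_inv[OF assms] by blast
    have "P = Nm P" using P cubic_range_pt by auto
    also have "\<dots> = g (g' P)" using g' by simp
    finally show "P \<in> g ` cubic" using Gq_cubic_sub[OF g'(1)] P by blast
  qed
qed

lemma line_alt: "line_through u w = (\<lambda>(a,b). pt (a *s u + b *s w)) ` {(a,b). a \<noteq> 0 \<or> b \<noteq> 0}"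
  unfolding line_through_def by auto

lemma line_map: "proj_map M ` line_through u w = line_through (u v* M) (w v* M)"
  unfolding line_alt image_image
  by (intro image_cong refl) (auto simp: proj_map_pt vector_matrix_left_distrib scalar_vector_matrix_assoc)

lemma line_range_pt: "line_through u w \<subseteq> range pt"
  unfolding line_through_def by auto

lemma lines_range_pt: "l \<in> lines \<Longrightarrow> l \<subseteq> range pt"
  unfolding lines_def using line_range_pt by blast

lemma comb_eq: "a *s (\<alpha> *s u + \<beta> *s w) + b *s (\<gamma> *s u + \<delta> *s w) = (a*\<alpha>+b*\<gamma>) *s u + (a*\<beta>+b*\<delta>) *s (w::'a::field^4)"
  by (simp add: vec_eq_iff algebra_simps)

lemma det_nz2: assumes "\<alpha>*\<delta> - \<beta>*\<gamma> \<noteq> 0" "a*\<alpha>+b*\<gamma> = 0" "a*\<beta>+b*\<delta> = (0::'a::field)" shows "a = 0 \<and> b = 0"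
proof -
  have "(\<alpha>*\<delta> - \<beta>*\<gamma>)*a = \<delta>*(a*\<alpha>+b*\<gamma>) - \<gamma>*(a*\<beta>+b*\<delta>)" by (simp add: algebra_simps)
  then have "a = 0" using assms by simp
  have "(\<alpha>*\<delta> - \<beta>*\<gamma>)*b = \<alpha>*(a*\<beta>+b*\<delta>) - \<beta>*(a*\<alpha>+b*\<gamma>)" by (simp add: algebra_simps)
  then have "b = 0" using assms by simp
  with \<open>a = 0\<close> show ?thesis by simp
qed

lemma line_span: assumes D: "\<alpha>*\<delta> - \<beta>*\<gamma> \<noteq> 0"
  shows "line_through (\<alpha> *s u + \<beta> *s w) (\<gamma> *s u + \<delta> *s w) = line_through u (w::'a::field^4)"
  unfolding line_through_def
proof (intro set_eqI iffI)
  fix P assume "P \<in> {pt (a *s (\<alpha> *s u + \<beta> *s w) + b *s (\<gamma> *s u + \<delta> *s w)) |a b. a \<noteq> 0 \<or> b \<noteq> 0}"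
  then obtain a b where P: "P = pt (a *s (\<alpha> *s u + \<beta> *s w) + b *s (\<gamma> *s u + \<delta> *s w))" "a \<noteq> 0 \<or> b \<noteq> 0" by blast
  have "a*\<alpha>+b*\<gamma> \<noteq> 0 \<or> a*\<beta>+b*\<delta> \<noteq> 0" using det_nz2[OF D, of a b] P(2) by blast
  then show "P \<in> {pt (a *s u + b *s w) |a b. a \<noteq> 0 \<or> b \<noteq> 0}" unfolding P comb_eq by blast
next
  fix P assume "P \<in> {pt (a *s u + b *s w) |a b. a \<noteq> 0 \<or> b \<noteq> 0}"
  then obtain a' b' where P: "P = pt (a' *s u + b' *s w)" "a' \<noteq> 0 \<or> b' \<noteq> 0" by blast
  define a where "a = (a'*\<delta> - b'*\<gamma>)/(\<alpha>*\<delta> - \<beta>*\<gamma>)"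
  define b where "b = (b'*\<alpha> - a'*\<beta>)/(\<alpha>*\<delta> - \<beta>*\<gamma>)"
  have aD: "a*(\<alpha>*\<delta> - \<beta>*\<gamma>) = a'*\<delta> - b'*\<gamma>" unfolding a_def using D by simp
  have bD: "b*(\<alpha>*\<delta> - \<beta>*\<gamma>) = b'*\<alpha> - a'*\<beta>" unfolding b_def using D by simp
  have "(a*\<alpha>+b*\<gamma>)*(\<alpha>*\<delta> - \<beta>*\<gamma>) = (a*(\<alpha>*\<delta> - \<beta>*\<gamma>))*\<alpha> + (b*(\<alpha>*\<delta> - \<beta>*\<gamma>))*\<gamma>"
    by (simp add: algebra_simps)
  also have "\<dots> = a'*(\<alpha>*\<delta> - \<beta>*\<gamma>)" unfolding aD bD by (simp add: algebra_simps)
  finally have 11: "a*\<alpha>+b*\<gamma> = a'" using D by simp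
  have "(a*\<beta>+b*\<delta>)*(\<alpha>*\<delta> - \<beta>*\<gamma>) = (a*(\<alpha>*\<delta> - \<beta>*\<gamma>))*\<beta> + (b*(\<alpha>*\<delta> - \<beta>*\<gamma>))*\<delta>"
    by (simp add: algebra_simps)
  also have "\<dots> = b'*(\<alpha>*\<delta> - \<beta>*\<gamma>)" unfolding aD bD by (simp add: algebra_simps)
  finally have 12: "a*\<beta>+b*\<delta> = b'" using D by simp
  note 1 = 11 12
  have "a \<noteq> 0 \<or> b \<noteq> 0" using 1 P(2) by auto
  then show "P \<in> {pt (a *s (\<alpha> *s u + \<beta> *s w) + b *s (\<gamma> *s u + \<delta> *s w)) |a b. a \<noteq> 0 \<or> b \<noteq> 0}"
    unfolding P comb_eq 1[symmetric] by blast
qed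

lemma lin_indep2_span: assumes "lin_indep2 u w" "\<alpha>*\<delta>-\<beta>*\<gamma> \<noteq> 0"
  shows "lin_indep2 (\<alpha> *s u + \<beta> *s w) (\<gamma> *s u + \<delta> *s (w::'a::field^4))"
  unfolding lin_indep2_def comb_eq
proof (intro allI impI)
  fix a b assume "(a*\<alpha>+b*\<gamma>) *s u + (a*\<beta>+b*\<delta>) *s w = 0"
  then have "a*\<alpha>+b*\<gamma> = 0 \<and> a*\<beta>+b*\<delta> = 0" using assms(1) unfolding lin_indep2_def by blast
  then show "a = 0 \<and> b = 0" using det_nz2[OF assms(2)] by blast
qed

lemma cm_inv_vec: "v v* cubic_mat a b c d v* cubic_mat d (-b) (-c) a = (a*d-b*c)^3 *s v"
  by (simp add: vector_matrix_mul_assoc cm_inv_r cubic_mat_diag)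
lemma cm_inv_vec': "v v* cubic_mat d (-b) (-c) a v* cubic_mat a b c d = (a*d-b*c)^3 *s v"
  by (simp add: vector_matrix_mul_assoc cm_inv_l cubic_mat_diag)

lemma lin_indep2_map: assumes "a*d-b*c \<noteq> 0" "lin_indep2 u w"
  shows "lin_indep2 (u v* cubic_mat a b c d) (w v* cubic_mat a b c d)"
  unfolding lin_indep2_def
proof (intro allI impI)
  fix x y assume h: "x *s (u v* cubic_mat a b c d) + y *s (w v* cubic_mat a b c d) = 0"
  have "(x *s u + y *s w) v* cubic_mat a b c d = 0"
    using h by (simp add: vector_matrix_left_distrib scalar_vector_matrix_assoc)
  then have "(a*d-b*c)^3 *s (x *s u + y *s w) = 0" using cm_inv_vec[of "x *s u + y *s w" a b c d] by simp
  then have "x *s u + y *s w = 0" using assms(1) by (subst (asm) vector_mul_eq_0) simp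
  then show "x = 0 \<and> y = 0" using assms(2) unfolding lin_indep2_def by blast
qed

lemma Gq_lines: assumes "g \<in> Gq" "l \<in> lines" shows "g ` l \<in> lines"
proof -
  obtain a b c d where 1: "a*d-b*c \<noteq> 0" "g = proj_map (cubic_mat a b c d)" using assms(1) by (rule Gq_memE)
  obtain u w where l: "l = line_through u w" "lin_indep2 u w" using assms(2) unfolding lines_def by blast
  show ?thesis unfolding 1 l line_map lines_def using lin_indep2_map[OF 1(1) l(2)] by blast
qed



lemma tangent_hom: "tangent t = line_through (X t 1) (T t 1 1 0)"
  by (simp add: tangent_def X_def T_def)
lemma tangent_inf_hom: "tangent_inf = line_through (X 1 0) (T 1 0 0 1)"
  by (simp add: tangent_inf_def X_def T_def)

lemma T_decomp: assumes "y \<noteq> 0"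
  shows "T x y p r = (3*r*y^2) *s X (x/y) 1 + (y^2*(p - (x/y)*r)) *s T (x/y) 1 1 0"
  using assms by (simp add: T_def X_def vec4_eq_iff field_simps power2_eq_square power3_eq_cube)

lemma tangent_hom_out: assumes D: "x*r - y*p \<noteq> 0"
  shows "line_through (X x y) (T x y p r) \<in> tangents"
proof (cases "y = 0")
  case False
  define t where "t = x/y"
  have 1: "X x y = y^3 *s X t 1 + 0 *s T t 1 1 0" unfolding t_def using X_scale[OF False] by simp
  have 2: "T x y p r = (3*r*y^2) *s X t 1 + (y^2*(p - t*r)) *s T t 1 1 0" unfolding t_def by (rule T_decomp[OF False])
  have "p - t*r \<noteq> 0"
  proof
    assume "p - t*r = 0"
    then have "y*p - x*r = 0" unfolding t_def using False by (simp add: field_simps)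
    with D show False by (simp add: algebra_simps)
  qed
  then have "y^3 * (y^2*(p - t*r)) - 0 * (3*r*y^2) \<noteq> 0" using False by simp
  then have "line_through (X x y) (T x y p r) = tangent t"
    unfolding 1 2 tangent_hom by (rule line_span)
  then show ?thesis unfolding tangents_def by blast
next
  case True
  then have x: "x \<noteq> 0" "r \<noteq> 0" using D by auto
  have 1: "X x y = x^3 *s X 1 0 + 0 *s T 1 0 0 1" unfolding True by (simp add: X_def vec4_eq_iff)
  have 2: "T x y p r = (3*x^2*p) *s X 1 0 + (x^2*r) *s T 1 0 0 1" unfolding True by (simp add: X_def T_def vec4_eq_iff)
  have "x^3 * (x^2*r) - 0 * (3*x^2*p) \<noteq> 0" using x by simp
  then have "line_through (X x y) (T x y p r) = tangent_inf"
    unfolding 1 2 tangent_inf_hom by (rule line_span)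
  then show ?thesis unfolding tangents_def by blast
qed

lemma tangents_hom: "tangents = {line_through (X x y) (T x y p r) | x y p r. x*r - y*p \<noteq> 0}"
proof (intro set_eqI iffI)
  fix l :: "'a pt set" assume "l \<in> tangents"
  then consider t where "l = tangent t" | "l = tangent_inf" unfolding tangents_def by blast
  then show "l \<in> {line_through (X x y) (T x y p r) | x y p r. x*r - y*p \<noteq> 0}"
  proof cases
    case 1 then show ?thesis unfolding tangent_hom
      by (intro CollectI exI[of _ t] exI[of _ 1] exI[of _ 1] exI[of _ 0]) simp
  next
    case 2 then show ?thesis unfolding tangent_inf_hom
      by (intro CollectI exI[of _ 1] exI[of _ 0] exI[of _ 0] exI[of _ 1]) simp
  qed
next
  fix l :: "'a pt set" assume "l \<in> {line_through (X x y) (T x y p r) | x y p r. x*r - y*p \<noteq> 0}"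
  then show "l \<in> tangents" using tangent_hom_out by blast
qed

lemma Gq_tangent: assumes "g \<in> Gq" "l \<in> tangents" shows "g ` l \<in> tangents"
proof -
  obtain a b c d where 1: "a*d-b*c \<noteq> 0" "g = proj_map (cubic_mat a b c d)" using assms(1) by (rule Gq_memE)
  obtain x y p r where l: "l = line_through (X x y) (T x y p r)" "x*r - y*p \<noteq> 0"
    using assms(2) unfolding tangents_hom by blast
  have "(a*x+b*y)*(c*p+d*r) - (c*x+d*y)*(a*p+b*r) = (a*d-b*c)*(x*r-y*p)" by (simp add: algebra_simps)
  then have "(a*x+b*y)*(c*p+d*r) - (c*x+d*y)*(a*p+b*r) \<noteq> 0" using 1 l by simp
  then show ?thesis unfolding 1 l line_map X_mult T_mult tangents_hom by blast
qed

definition dot :: "'a::field vec4 \<Rightarrow> 'a vec4 \<Rightarrow> 'a" where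
  "dot c v = (\<Sum>i\<in>UNIV. c$i * v$i)"

lemma plane_dot: "plane c = {pt v | v. v \<noteq> 0 \<and> dot c v = 0}"
  unfolding plane_def dot_def ..

lemma dot_scale: "dot (k *s c) v = k * dot c v" "dot c (k *s v) = k * dot c v"
  unfolding dot_def by (simp_all add: sum_distrib_left algebra_simps)

lemma dot_vmult: "dot c (v v* M) = dot (M *v c) v"
  unfolding dot_def vector_matrix_mult_def matrix_vector_mult_def by (simp add: sum4 algebra_simps)

lemma plane_scale: "k \<noteq> 0 \<Longrightarrow> plane (k *s c) = plane c"
  unfolding plane_dot dot_scale by simp

lemma plane_map:
  assumes "M *v c' = k *s c" "k \<noteq> 0" "\<And>v. v v* M v* M' = l *s v" "\<And>v. v v* M' v* M = l *s v" "l \<noteq> 0"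
  shows "proj_map M ` plane c = plane c'"
proof (intro set_eqI iffI)
  fix Q assume "Q \<in> proj_map M ` plane c"
  then obtain v where v: "Q = pt (v v* M)" "v \<noteq> 0" "dot c v = 0" unfolding plane_dot by (auto simp: proj_map_pt)
  have "v v* M \<noteq> 0"
  proof
    assume "v v* M = 0"
    then have "l *s v = 0" using assms(3)[of v] by simp
    with v assms show False by simp
  qed
  moreover have "dot c' (v v* M) = 0" unfolding dot_vmult assms(1) dot_scale v by simp
  ultimately show "Q \<in> plane c'" unfolding plane_dot v by blast
next
  fix Q assume "Q \<in> plane c'"
  then obtain w where w: "Q = pt w" "w \<noteq> 0" "dot c' w = 0" unfolding plane_dot by blast
  define v where "v = w v* M'"
  have vM: "v v* M = l *s w" unfolding v_def by (rule assms(4))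
  have "v \<noteq> 0"
  proof
    assume "v = 0"
    then have "l *s w = 0" using vM by simp
    with w assms show False by simp
  qed
  moreover have "k * dot c v = 0"
  proof -
    have "k * dot c v = dot c' (v v* M)" unfolding dot_vmult assms(1) dot_scale ..
    also have "\<dots> = 0" unfolding vM dot_scale w by simp
    finally show ?thesis .
  qed
  then have "dot c v = 0" using assms(2) by simp
  moreover have "Q = proj_map M (pt v)" unfolding proj_map_pt vM w using assms(5) by (simp add: pt_scale)
  ultimately show "Q \<in> proj_map M ` plane c" unfolding plane_dot by blast
qed

lemma Oc_scale: "y \<noteq> 0 \<Longrightarrow> Oc x y = y^3 *s Oc (x/y) 1"
  by (simp add: Oc_def vec4_eq_iff field_simps power2_eq_square power3_eq_cube)

lemma osc_hom: "osc_planes = {plane (Oc x y) | x y. x \<noteq> 0 \<or> y \<noteq> 0}"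
proof (intro set_eqI iffI)
  fix P :: "'a pt set" assume "P \<in> osc_planes"
  then consider t where "P = osc_plane t" | "P = osc_plane_inf" unfolding osc_planes_def by blast
  then show "P \<in> {plane (Oc x y) | x y. x \<noteq> 0 \<or> y \<noteq> 0}"
  proof cases
    case 1
    have "osc_plane t = plane (Oc t 1)" by (simp add: osc_plane_def Oc_def)
    then show ?thesis using 1 by (intro CollectI exI[of _ t] exI[of _ 1]) simp
  next
    case 2
    have "plane (Oc 1 (0::'a)) = plane (vec4 0 0 0 1)" using plane_scale[of "-1::'a" "vec4 0 0 0 1"] by (simp add: Oc_def)
    then have "osc_plane_inf = plane (Oc 1 (0::'a))" unfolding osc_plane_inf_def by simp
    then show ?thesis using 2 by (intro CollectI exI[of _ 1] exI[of _ 0]) simp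
  qed
next
  fix P :: "'a pt set" assume "P \<in> {plane (Oc x y) | x y. x \<noteq> 0 \<or> y \<noteq> 0}"
  then obtain x y where P: "P = plane (Oc x y)" "x \<noteq> 0 \<or> y \<noteq> 0" by blast
  show "P \<in> osc_planes"
  proof (cases "y = 0")
    case False
    have "P = plane (y^3 *s Oc (x/y) 1)" unfolding P by (simp only: Oc_scale[OF False])
    also have "\<dots> = plane (Oc (x/y) 1)" by (rule plane_scale) (simp add: False)
    also have "\<dots> = osc_plane (x/y)" by (simp add: osc_plane_def Oc_def)
    finally have "P = osc_plane (x/y)" .
    then show ?thesis unfolding osc_planes_def by (metis UnI1 rangeI)
  next
    case True
    have x: "x \<noteq> 0" using P(2) True by simp
    have "Oc x y = (-(x^3)) *s vec4 0 0 0 1" unfolding True by (simp add: Oc_def)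
    then have "P = plane ((-(x^3)) *s vec4 0 0 0 1)" unfolding P by (simp only:)
    also have "\<dots> = osc_plane_inf" unfolding osc_plane_inf_def by (rule plane_scale) (simp add: x)
    finally have "P = osc_plane_inf" .
    then show ?thesis unfolding osc_planes_def by (metis UnI2 singletonI)
  qed
qed

lemma Gq_plane_Oc: assumes "a*d-b*c \<noteq> 0"
  shows "proj_map (cubic_mat a b c d) ` plane (Oc x y) = plane (Oc (a*x+b*y) (c*x+d*y))"
  by (rule plane_map[OF Oc_mult _ cm_inv_vec cm_inv_vec']) (use assms in simp_all)

lemma Gq_osc: assumes "g \<in> Gq" "\<pi> \<in> osc_planes" shows "g ` \<pi> \<in> osc_planes"
proof -
  obtain a b c d where 1: "a*d-b*c \<noteq> 0" "g = proj_map (cubic_mat a b c d)" using assms(1) by (rule Gq_memE)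
  obtain x y where p: "\<pi> = plane (Oc x y)" "x \<noteq> 0 \<or> y \<noteq> 0" using assms(2) unfolding osc_hom by blast
  show ?thesis unfolding 1 p Gq_plane_Oc[OF 1(1)] osc_hom using nz_pair[OF 1(1) p(2)] by blast
qed



lemma UG_closed: assumes g: "g \<in> Gq" and l: "l \<in> UGamma_lines" shows "g ` l \<in> UGamma_lines"
proof -
  from l have l1: "l \<in> lines" and l2: "card (l \<inter> cubic) = 1" and l3: "l \<notin> tangents"
    and l4: "\<exists>\<pi>\<in>osc_planes. l \<subseteq> \<pi>" unfolding UGamma_lines_def by auto
  obtain g' where g': "g' \<in> Gq" "\<forall>S. g' (g S) = Nm S" using Gq_inv[OF g] by blast
  have A: "g ` l \<in> lines" using Gq_lines[OF g l1] .
  have "g ` l \<inter> cubic = g ` l \<inter> g ` cubic" using Gq_cubic[OF g] by simp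
  also have "\<dots> = g ` (l \<inter> cubic)"
    using inj_on_image_Int[OF Gq_inj[OF g] lines_range_pt[OF l1] cubic_range_pt] by simp
  finally have eq: "g ` l \<inter> cubic = g ` (l \<inter> cubic)" .
  have sub: "l \<inter> cubic \<subseteq> range pt" using lines_range_pt[OF l1] by blast
  have "card (g ` l \<inter> cubic) = card (l \<inter> cubic)"
    unfolding eq by (rule card_image[OF inj_on_subset[OF Gq_inj[OF g] sub]])
  then have B: "card (g ` l \<inter> cubic) = 1" using l2 by simp
  have C: "g ` l \<notin> tangents"
  proof
    assume "g ` l \<in> tangents"
    then have "g' ` g ` l \<in> tangents" using Gq_tangent[OF g'(1)] by blast
    moreover have "g' ` g ` l = l" unfolding image_image g'(2)[rule_format] using Nm_points[OF lines_range_pt[OF l1]] .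
    ultimately show False using l3 by simp
  qed
  from l4 obtain \<pi> where "\<pi> \<in> osc_planes" "l \<subseteq> \<pi>" by blast
  then have D: "\<exists>\<pi>\<in>osc_planes. g ` l \<subseteq> \<pi>" using Gq_osc[OF g] by blast
  show ?thesis unfolding UGamma_lines_def using A B C D by blast
qed

definition l0 :: "'a::field pt set" where "l0 = line_through (vec4 0 0 0 1) (vec4 0 1 0 0)"

lemma l0_memD: assumes "pt v \<in> l0" shows "v$0 = 0 \<and> v$2 = 0"
proof -
  obtain a b where "pt v = pt (a *s vec4 0 0 0 1 + b *s vec4 0 1 0 0)"
    using assms unfolding l0_def line_through_def by blast
  then obtain c where "v = c *s (a *s vec4 0 0 0 1 + b *s vec4 0 1 0 0)" using pt_eqD by blast
  then show ?thesis by simp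
qed

lemma l0_memI: "a \<noteq> 0 \<or> b \<noteq> 0 \<Longrightarrow> pt (vec4 0 b 0 a) \<in> l0"
  unfolding l0_def line_through_def
  by (rule CollectI, rule exI[of _ a], rule exI[of _ b]) simp

lemma l0_lines: "l0 \<in> lines"
proof -
  have "lin_indep2 (vec4 0 0 0 1) (vec4 0 1 0 (0::'a))" unfolding lin_indep2_def by simp
  then show ?thesis unfolding lines_def l0_def by blast
qed

lemma Pt0: "Pt 0 = pt (vec4 0 0 0 1)" by (simp add: Pt_def)

lemma l0_cubic: "l0 \<inter> cubic = {Pt 0}"
proof (intro set_eqI iffI)
  fix Q :: "'a pt" assume Q: "Q \<in> l0 \<inter> cubic"
  then consider t where "Q = Pt t" | "Q = Pinf" unfolding cubic_def by blast
  then show "Q \<in> {Pt 0}"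
  proof cases
    case 1
    then have "pt (vec4 (t^3) (t^2) t 1) \<in> l0" using Q unfolding Pt_def by simp
    then have "t = 0" using l0_memD by fastforce
    then show ?thesis using 1 by simp
  next
    case 2
    then have "pt (vec4 1 0 0 (0::'a)) \<in> l0" using Q unfolding Pinf_def by simp
    then show ?thesis using l0_memD by fastforce
  qed
next
  fix Q :: "'a pt" assume "Q \<in> {Pt 0}"
  then have Q: "Q = Pt 0" by simp
  have "Pt 0 \<in> (l0 :: 'a pt set)" unfolding Pt0 using l0_memI[of 1 0] by simp
  moreover have "Pt 0 \<in> (cubic :: 'a pt set)" unfolding cubic_def by blast
  ultimately show "Q \<in> l0 \<inter> cubic" unfolding Q by blast
qed

lemma l0_not_tangent: "(l0 :: 'a::field pt set) \<notin> tangents"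
proof
  assume "(l0 :: 'a pt set) \<in> tangents"
  then have "(l0 :: 'a pt set) \<in> range tangent \<union> {tangent_inf}" unfolding tangents_def .
  then show False
  proof (rule UnE)
    assume "(l0 :: 'a pt set) \<in> range tangent"
    then obtain t where 1: "(l0 :: 'a pt set) = tangent t" by (rule rangeE)
    have "pt (vec4 (3*t^2) (2*t) 1 0) \<in> tangent t" unfolding tangent_def line_through_def
      by (rule CollectI, rule exI[of _ 0], rule exI[of _ 1]) simp
    then have "pt (vec4 (3*t^2) (2*t) 1 0) \<in> (l0 :: 'a pt set)" using 1 by simp
    from l0_memD[OF this] show False by simp
  next
    assume "(l0 :: 'a pt set) \<in> {tangent_inf}"
    then have 2: "(l0 :: 'a pt set) = tangent_inf" by (rule singletonD)
    have "pt (vec4 1 0 0 (0::'a)) \<in> tangent_inf" unfolding tangent_inf_def line_through_def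
      by (rule CollectI, rule exI[of _ 1], rule exI[of _ 0]) simp
    then have "pt (vec4 1 0 0 (0::'a)) \<in> l0" using 2 by simp
    from l0_memD[OF this] show False by simp
  qed
qed

lemma l0_osc: "(l0 :: 'a::field pt set) \<subseteq> osc_plane 0"
proof
  fix Q :: "'a pt" assume "Q \<in> l0"
  then obtain a b :: 'a where Q: "Q = pt (a *s vec4 0 0 0 1 + b *s vec4 0 1 0 0)" "a \<noteq> 0 \<or> b \<noteq> 0"
    unfolding l0_def line_through_def by blast
  have "osc_plane (0::'a) = plane (vec4 1 0 0 0)" by (simp add: osc_plane_def)
  then show "Q \<in> osc_plane 0" unfolding plane_def Q(1) using Q(2) by (auto simp: dot4)
qed

lemma l0_UG: "l0 \<in> UGamma_lines"
proof -
  have "\<exists>\<pi>\<in>osc_planes. (l0::'a pt set) \<subseteq> \<pi>" using l0_osc unfolding osc_planes_def by blast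
  then show ?thesis unfolding UGamma_lines_def using l0_lines l0_cubic l0_not_tangent by auto
qed



lemma two_nz: assumes "odd CARD('a::{field,finite})" shows "(2::'a) \<noteq> 0"
proof
  assume two: "(2::'a) = 0"
  have "(\<Sum>x\<in>(UNIV::'a set). (1::'a)) = 0"
    by (rule sum_involution_eq_0[where h="\<lambda>x. x + 1"]) (use two in \<open>simp_all add: add.assoc\<close>)
  then have "of_nat CARD('a) = (0::'a)" by simp
  moreover obtain k where "CARD('a) = 2*k + 1" using assms oddE by blast
  ultimately show False using two by simp
qed

lemma plane0D: assumes "pt v \<in> plane (vec4 1 0 0 (0::'a::field))" shows "v$0 = 0"
proof -
  obtain z where z: "pt v = pt z" "(\<Sum>i\<in>UNIV. vec4 1 0 0 (0::'a) $ i * z $ i) = 0"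
    using assms unfolding plane_def by blast
  have "z$0 = 0" using z(2) by (simp add: sum4)
  moreover obtain k where "v = k *s z" using pt_eqD[OF z(1)] by blast
  ultimately show ?thesis by simp
qed

lemma line_mem1: "pt u \<in> line_through u w"
  unfolding line_through_def by (rule CollectI, rule exI[of _ 1], rule exI[of _ 0]) simp

lemma line_mem2: "pt w \<in> line_through u w"
  unfolding line_through_def by (rule CollectI, rule exI[of _ 0], rule exI[of _ 1]) simp

lemma UG_in_x0:
  assumes two: "(2::'a::field) \<noteq> 0" and l: "(l :: 'a pt set) \<in> UGamma_lines"
    and sub: "l \<subseteq> plane (vec4 1 0 0 0)"
  shows "\<exists>h\<in>Gq. h ` l0 = l"
proof -
  from l have l1: "l \<in> lines" and l2: "card (l \<inter> cubic) = 1" and l3: "l \<notin> tangents"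
    unfolding UGamma_lines_def by auto
  obtain u w where lu: "l = line_through u w" "lin_indep2 u w" using l1 unfolding lines_def by blast
  define e3 :: "'a vec4" where "e3 = vec4 0 0 0 1"
  have u0: "u$0 = 0" using plane0D sub line_mem1[of u w] lu(1) by blast
  have w0: "w$0 = 0" using plane0D sub line_mem2[of w u] lu(1) by blast
  obtain Q where Q: "l \<inter> cubic = {Q}" using l2 by (rule card_1_singletonE)
  then have Ql: "Q \<in> l" and Qc: "Q \<in> cubic" by auto
  have Qp: "Q \<in> plane (vec4 1 0 0 0)" using Ql sub by blast
  have Qe: "Q = pt e3"
  proof -
    from Qc consider t where "Q = Pt t" | "Q = Pinf" unfolding cubic_def by blast
    then show ?thesis
    proof cases
      case 1
      then have "pt (vec4 (t^3) (t^2) t 1) \<in> plane (vec4 1 0 0 (0::'a))" using Qp unfolding Pt_def by simp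
      from plane0D[OF this] have "t = 0" by simp
      then show ?thesis using 1 unfolding e3_def Pt_def by simp
    next
      case 2
      then have "pt (vec4 1 0 0 (0::'a)) \<in> plane (vec4 1 0 0 (0::'a))" using Qp unfolding Pinf_def by simp
      from plane0D[OF this] show ?thesis by simp
    qed
  qed
  obtain a b where ab: "pt e3 = pt (a *s u + b *s w)" "a \<noteq> 0 \<or> b \<noteq> 0"
    using Ql unfolding Qe lu(1) line_through_def by blast
  obtain k where k: "k \<noteq> 0" "e3 = k *s (a *s u + b *s w)" using pt_eqD[OF ab(1)] by blast
  define \<alpha> where "\<alpha> = k*a"
  define \<beta> where "\<beta> = k*b"
  have e3uw: "e3 = \<alpha> *s u + \<beta> *s w" unfolding k(2) \<alpha>_def \<beta>_def by (simp add: vec_eq_iff algebra_simps)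
  have ab': "\<alpha> \<noteq> 0 \<or> \<beta> \<noteq> 0" using ab(2) k(1) unfolding \<alpha>_def \<beta>_def by auto
  obtain \<gamma> \<delta> where gd: "\<alpha>*\<delta> - \<beta>*\<gamma> \<noteq> 0"
  proof (cases "\<alpha> = 0")
    case True
    show ?thesis by (rule that[of 0 1]) (use ab' True in simp)
  next
    case False
    show ?thesis by (rule that[of 1 0]) (use False in simp)
  qed
  define w2 where "w2 = \<gamma> *s u + \<delta> *s w"
  have l_w2: "l = line_through e3 w2" unfolding lu(1) e3uw w2_def using line_span[OF gd] by simp
  have i_w2: "lin_indep2 e3 w2" unfolding e3uw w2_def by (rule lin_indep2_span[OF lu(2) gd])
  have w20: "w2$0 = 0" unfolding w2_def using u0 w0 by simp
  define p where "p = w2$1"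
  define q where "q = w2$2"
  define w3 where "w3 = vec4 0 p q 0"
  have w3eq: "(-(w2$3)) *s e3 + 1 *s w2 = w3"
    unfolding e3_def w3_def p_def q_def by (subst (2) vec4_eta[of w2]) (simp add: w20)
  have e3eq: "1 *s e3 + 0 *s w2 = e3" by simp
  have d1: "1*1 - 0*(-(w2$3)) \<noteq> (0::'a)" by simp
  have l_w3: "l = line_through e3 w3"
    unfolding l_w2 using line_span[OF d1, of e3 w2] unfolding w3eq e3eq by simp
  have i_w3: "lin_indep2 e3 w3"
    using lin_indep2_span[OF i_w2 d1] unfolding w3eq e3eq .
  show ?thesis
  proof (cases "p = 0")
    case True
    have "q \<noteq> 0"
    proof
      assume "q = 0"
      then have "0 *s e3 + 1 *s w3 = 0" unfolding w3_def using True by simp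
      then have "(0::'a) = 0 \<and> (1::'a) = 0" by (rule i_w3[unfolded lin_indep2_def, rule_format])
      then show False by simp
    qed
    define e2 :: "'a vec4" where "e2 = vec4 0 0 1 0"
    have eq2: "0 *s e3 + q *s e2 = w3" unfolding e2_def e3_def w3_def using True by simp
    have dq: "1*q - 0*0 \<noteq> (0::'a)" using \<open>q \<noteq> 0\<close> by simp
    have "l = line_through e3 e2"
      using line_span[OF dq, of e3 e2] unfolding l_w3 eq2 by simp
    moreover have "tangent 0 = line_through e3 e2" unfolding tangent_def e3_def e2_def by simp
    ultimately have "l = tangent 0" by simp
    moreover have "tangent 0 \<in> (tangents :: 'a pt set set)" unfolding tangents_def by (rule UnI1[OF rangeI])
    ultimately have "l \<in> tangents" by simp
    with l3 show ?thesis by simp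
  next
    case False
    define e where "e = q/p"
    define e1 :: "'a vec4" where "e1 = vec4 0 1 e 0"
    have eq1: "0 *s e3 + p *s e1 = w3" unfolding e1_def e3_def w3_def e_def using False by simp
    have dp: "1*p - 0*0 \<noteq> (0::'a)" using False by simp
    have l_e1: "l = line_through e3 e1"
      using line_span[OF dp, of e3 e1] unfolding l_w3 eq1 by simp
    define h where "h = proj_map (cubic_mat 1 0 (e/2) (1::'a))"
    have hG: "h \<in> Gq" unfolding h_def by (rule Gq_memI) simp
    define s where "s = 3*(e/2)^2"
    have "h ` l0 = line_through (vec4 0 0 0 1 v* cubic_mat 1 0 (e/2) 1) (vec4 0 1 0 0 v* cubic_mat 1 0 (e/2) 1)"
      unfolding h_def l0_def line_map ..
    also have "\<dots> = line_through e3 (vec4 0 1 e s)"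
      unfolding e3_def s_def using two by (simp add: cubic_mat_def)
    also have "\<dots> = line_through e3 e1"
    proof -
      have d: "1*1 - 0*(-s) \<noteq> (0::'a)" by simp
      have a: "1 *s e3 + 0 *s vec4 0 1 e s = e3" by (simp add: e3_def)
      have b: "(-s) *s e3 + 1 *s vec4 0 1 e s = e1" unfolding e3_def e1_def by simp
      show ?thesis using line_span[OF d, of e3 "vec4 0 1 e s"] unfolding a b by (rule sym)
    qed
    finally have "h ` l0 = l" using l_e1 by simp
    then show ?thesis using hG by (intro bexI[of _ h])
  qed
qed



lemma UG_orbit: assumes two: "(2::'a::field) \<noteq> 0" and l: "(l :: 'a pt set) \<in> UGamma_lines"
  shows "\<exists>h\<in>Gq. h ` l0 = l"
proof -
  obtain \<pi> where \<pi>: "\<pi> \<in> osc_planes" "l \<subseteq> \<pi>" using l unfolding UGamma_lines_def by blast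
  obtain x y where p: "\<pi> = plane (Oc x y)" "x \<noteq> 0 \<or> y \<noteq> 0" using \<pi>(1) unfolding osc_hom by blast
  obtain c d :: 'a where cd: "c*x + d*y = 1"
  proof (cases "y = 0")
    case True
    then have "x \<noteq> 0" using p(2) by simp
    show ?thesis by (rule that[of "1/x" 0]) (use \<open>x \<noteq> 0\<close> in simp)
  next
    case False
    show ?thesis by (rule that[of 0 "1/y"]) (use False in simp)
  qed
  have det: "y*d - (-x)*c \<noteq> 0" using cd by (simp add: algebra_simps)
  define g where "g = proj_map (cubic_mat y (-x) c d)"
  have gG: "g \<in> Gq" unfolding g_def by (rule Gq_memI[OF det])
  have "g ` \<pi> = plane (Oc (y*x + (-x)*y) (c*x + d*y))" unfolding g_def p(1) by (rule Gq_plane_Oc[OF det])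
  also have "\<dots> = plane (vec4 1 0 0 0)" unfolding cd by (simp add: Oc_def)
  finally have gpi: "g ` \<pi> = plane (vec4 1 0 0 0)" .
  have A: "g ` l \<subseteq> plane (vec4 1 0 0 0)" using image_mono[OF \<pi>(2), of g] unfolding gpi .
  have B: "g ` l \<in> UGamma_lines" by (rule UG_closed[OF gG l])
  obtain h where h: "h \<in> Gq" "h ` l0 = g ` l" using UG_in_x0[OF two B A] by blast
  obtain g' where g': "g' \<in> Gq" "\<forall>S. g' (g S) = Nm S" using Gq_inv[OF gG] by blast
  have "(g' \<circ> h) ` l0 = g' ` g ` l" unfolding image_comp[symmetric] h(2) ..
  also have "\<dots> = Nm ` l" unfolding image_image g'(2)[rule_format] ..
  also have "\<dots> = l" by (rule Nm_points[OF lines_range_pt]) (use l in \<open>simp add: UGamma_lines_def\<close>)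
  finally show ?thesis using Gq_comp[OF g'(1) h(1)] by (intro bexI[of _ "g' \<circ> h"])
qed

definition Dg :: "'a::field \<Rightarrow> 'a^4^4" where
  "Dg e = mat4 (vec4 1 0 0 0) (vec4 0 e 0 0) (vec4 0 0 (e^2) 0) (vec4 0 0 0 (e^3))"

lemma Dg_cm: "Dg e = cubic_mat 1 0 0 e" by (simp add: Dg_def cubic_mat_def)

lemma Dg_stab: assumes "e \<noteq> 0" shows "proj_map (Dg e) \<in> stabilizer (l0 :: 'a::field pt set)"
proof -
  have G: "proj_map (Dg e) \<in> Gq" unfolding Dg_cm by (rule Gq_memI) (use assms in simp)
  have d: "e^3 * e - 0 * 0 \<noteq> 0" using assms by simp
  have a: "e^3 *s vec4 0 0 0 1 + 0 *s vec4 0 1 0 0 = vec4 0 0 0 1 v* Dg e" by (simp add: Dg_def)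
  have b: "0 *s vec4 0 0 0 1 + e *s vec4 0 1 0 0 = vec4 0 1 0 0 v* Dg e" by (simp add: Dg_def)
  have "proj_map (Dg e) ` l0 = l0"
    unfolding l0_def line_map using line_span[OF d, of "vec4 0 0 0 1" "vec4 0 1 0 0"] unfolding a b .
  then show ?thesis using G unfolding stabilizer_def act_line_def by blast
qed

lemma stab_l0: assumes two: "(2::'a::field) \<noteq> 0"
  shows "stabilizer (l0::'a pt set) = (\<lambda>e. proj_map (Dg e)) ` {e. e \<noteq> 0}"
proof (intro set_eqI iffI)
  fix g assume "g \<in> stabilizer (l0 :: 'a pt set)"
  then have gG: "g \<in> Gq" and gl: "g ` l0 = l0" unfolding stabilizer_def act_line_def by auto
  obtain a b c d where 1: "a*d-b*c \<noteq> 0" "g = proj_map (cubic_mat a b c d)" using gG by (rule Gq_memE)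
  have m1: "pt (vec4 0 0 0 1) \<in> (l0::'a pt set)" using l0_memI[of 1 0] by simp
  have "g (pt (vec4 0 0 0 1)) \<in> g ` l0" using m1 by (rule imageI)
  then have "g (pt (vec4 0 0 0 1)) \<in> l0" unfolding gl .
  then have "pt (vec4 (b^3) (b^2*d) (b*d^2) (d^3)) \<in> l0" unfolding 1 proj_map_pt by (simp add: cubic_mat_def)
  from l0_memD[OF this] have b: "b = 0" by simp
  have m2: "pt (vec4 0 1 0 0) \<in> (l0::'a pt set)" using l0_memI[of 0 1] by simp
  have "g (pt (vec4 0 1 0 0)) \<in> g ` l0" using m2 by (rule imageI)
  then have "g (pt (vec4 0 1 0 0)) \<in> l0" unfolding gl .
  then have "pt (vec4 0 (a^2*d) (2*a*c*d) (3*c^2*d)) \<in> l0" unfolding 1 proj_map_pt b by (simp add: cubic_mat_def)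
  from l0_memD[OF this] have "2*a*c*d = 0" by simp
  moreover have "a \<noteq> 0" "d \<noteq> 0" using 1(1) b by auto
  ultimately have c: "c = 0" using two by simp
  have "proj_map (cubic_mat a 0 0 d) = proj_map (Dg (d/a))"
  proof (rule proj_map_cong[where k="a^3"])
    show "a^3 \<noteq> 0" using \<open>a \<noteq> 0\<close> by simp
    fix v :: "'a vec4"
    show "v v* cubic_mat a 0 0 d = a ^ 3 *s (v v* Dg (d / a))"
      using \<open>a \<noteq> 0\<close> by (subst (1 2) vec4_eta[of v])
        (simp add: cubic_mat_def Dg_def field_simps power2_eq_square power3_eq_cube)
  qed
  then have "g = proj_map (Dg (d/a))" unfolding 1 b c .
  moreover have "d/a \<noteq> 0" using \<open>a \<noteq> 0\<close> \<open>d \<noteq> 0\<close> by simp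
  ultimately show "g \<in> (\<lambda>e. proj_map (Dg e)) ` {e. e \<noteq> 0}" by (intro image_eqI[of _ _ "d/a"]) simp_all
next
  fix g assume "g \<in> (\<lambda>e. proj_map (Dg e)) ` {e. e \<noteq> (0::'a)}"
  then obtain e where "e \<noteq> 0" "g = proj_map (Dg e)" by blast
  then show "g \<in> stabilizer l0" using Dg_stab by simp
qed

lemma Dg_inj: "inj_on (\<lambda>e. proj_map (Dg e)) {e::'a::field. e \<noteq> 0}"
proof (rule inj_onI)
  fix e e' :: 'a assume "proj_map (Dg e) = proj_map (Dg e')"
  then have "proj_map (Dg e) (pt (vec4 1 1 0 0)) = proj_map (Dg e') (pt (vec4 1 1 0 0))" by simp
  then have "pt (vec4 1 e 0 0) = pt (vec4 1 e' 0 0)" by (simp add: proj_map_pt Dg_def)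
  then obtain k where "vec4 1 e 0 0 = k *s vec4 1 e' 0 0" using pt_eqD by blast
  then show "e = e'" by (simp add: vec4_eq_iff)
qed

lemma card_stab_l0: assumes two: "(2::'a::{field,finite}) \<noteq> 0"
  shows "card (stabilizer (l0::'a pt set)) = CARD('a) - 1"
proof -
  have "card (stabilizer (l0::'a pt set)) = card {e::'a. e \<noteq> 0}"
    unfolding stab_l0[OF two] by (rule card_image[OF Dg_inj])
  also have "{e::'a. e \<noteq> 0} = UNIV - {0}" by auto
  also have "card (UNIV - {0::'a}) = CARD('a) - 1" by (simp add: card_Diff_singleton)
  finally show ?thesis .
qed

lemma card_stab_conj: assumes hG: "h \<in> Gq"
  shows "card (stabilizer (h ` (l0::'a::field pt set))) = card (stabilizer (l0::'a pt set))"
proof -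
  obtain h' where h': "h' \<in> Gq" "\<forall>S. h' (h S) = Nm S \<and> h (h' S) = Nm S" using Gq_inv[OF hG] by blast
  have Nl0: "Nm ` (l0 :: 'a pt set) = l0" by (rule Nm_points[OF lines_range_pt[OF l0_lines]])
  have hback: "h' ` h ` (l0 :: 'a pt set) = l0" unfolding image_image using h'(2) Nl0 by simp
  define \<phi> where "\<phi> g = h \<circ> g \<circ> h'" for g :: "'a pt \<Rightarrow> 'a pt"
  define \<psi> where "\<psi> g = h' \<circ> g \<circ> h" for g :: "'a pt \<Rightarrow> 'a pt"
  have "bij_betw \<phi> (stabilizer l0) (stabilizer (h ` l0))"
  proof (rule bij_betw_byWitness[where f'=\<psi>])
    show "\<forall>g\<in>stabilizer l0. \<psi> (\<phi> g) = g"
    proof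
      fix g assume "g \<in> stabilizer (l0::'a pt set)"
      then have gG: "g \<in> Gq" unfolding stabilizer_def by simp
      show "\<psi> (\<phi> g) = g" unfolding \<phi>_def \<psi>_def
        using h'(2) Gq_Nm[OF gG] by (simp add: fun_eq_iff)
    qed
    show "\<forall>g\<in>stabilizer (h ` l0). \<phi> (\<psi> g) = g"
    proof
      fix g assume "g \<in> stabilizer (h ` (l0::'a pt set))"
      then have gG: "g \<in> Gq" unfolding stabilizer_def by simp
      show "\<phi> (\<psi> g) = g" unfolding \<phi>_def \<psi>_def
        using h'(2) Gq_Nm[OF gG] by (simp add: fun_eq_iff)
    qed
    show "\<phi> ` stabilizer l0 \<subseteq> stabilizer (h ` l0)"
    proof
      fix f assume "f \<in> \<phi> ` stabilizer (l0::'a pt set)"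
      then obtain g where g: "g \<in> stabilizer l0" "f = \<phi> g" by blast
      then have gG: "g \<in> Gq" and gl: "g ` l0 = l0" unfolding stabilizer_def act_line_def by auto
      have "f \<in> Gq" unfolding g(2) \<phi>_def by (intro Gq_comp hG gG h'(1))
      moreover have "f ` h ` l0 = h ` l0" unfolding g(2) \<phi>_def image_comp[symmetric] hback gl ..
      ultimately show "f \<in> stabilizer (h ` l0)" unfolding stabilizer_def act_line_def by blast
    qed
    show "\<psi> ` stabilizer (h ` l0) \<subseteq> stabilizer l0"
    proof
      fix f assume "f \<in> \<psi> ` stabilizer (h ` (l0::'a pt set))"
      then obtain g where g: "g \<in> stabilizer (h ` l0)" "f = \<psi> g" by blast
      then have gG: "g \<in> Gq" and gl: "g ` h ` l0 = h ` l0" unfolding stabilizer_def act_line_def by auto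
      have "f \<in> Gq" unfolding g(2) \<psi>_def by (intro Gq_comp hG gG h'(1))
      moreover have "f ` l0 = l0" unfolding g(2) \<psi>_def image_comp[symmetric] gl hback ..
      ultimately show "f \<in> stabilizer l0" unfolding stabilizer_def act_line_def by blast
    qed
  qed
  then have "card (stabilizer (l0::'a pt set)) = card (stabilizer (h ` l0))" by (rule bij_betw_same_card)
  then show ?thesis by (rule sym)
qed



theorem theorem6p2:
  assumes "odd CARD('a::{field,finite})" and "CARD('a) \<ge> 5"
  shows "UGamma_lines \<noteq> ({} :: 'a pt set set)
    \<and> (\<forall>g\<in>Gq. \<forall>l\<in>(UGamma_lines :: 'a pt set set). act_line g l \<in> UGamma_lines)
    \<and> (\<forall>l1\<in>(UGamma_lines :: 'a pt set set). \<forall>l2\<in>UGamma_lines. \<exists>g\<in>Gq. act_line g l1 = l2)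
    \<and> (\<forall>l\<in>(UGamma_lines :: 'a pt set set). card (stabilizer l) = CARD('a) - 1)
    \<and> line_through (vec4 0 0 0 1) (vec4 (0::'a) 1 0 0) \<in> UGamma_lines
    \<and> (\<forall>g\<in>stabilizer (line_through (vec4 0 0 0 1) (vec4 (0::'a) 1 0 0)).
         \<exists>d::'a. d \<noteq> 0 \<and>
           g = proj_map (mat4 (vec4 1 0 0 0) (vec4 0 d 0 0) (vec4 0 0 (d^2) 0) (vec4 0 0 0 (d^3))))"
  proof -
  have two: "(2::'a) \<noteq> 0" by (rule two_nz[OF assms(1)])
  have L0: "line_through (vec4 0 0 0 1) (vec4 (0::'a) 1 0 0) = l0" by (simp add: l0_def)
  have Nl0: "Nm ` (l0 :: 'a pt set) = l0" by (rule Nm_points[OF lines_range_pt[OF l0_lines]])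
  have P1: "UGamma_lines \<noteq> ({} :: 'a pt set set)"
  proof
    assume "UGamma_lines = ({} :: 'a pt set set)"
    with l0_UG[where 'a='a] show False by simp
  qed
  have P2: "\<forall>g\<in>Gq. \<forall>l\<in>(UGamma_lines :: 'a pt set set). act_line g l \<in> UGamma_lines"
    unfolding act_line_def using UG_closed by blast
  have P3: "\<forall>l1\<in>(UGamma_lines :: 'a pt set set). \<forall>l2\<in>UGamma_lines. \<exists>g\<in>Gq. act_line g l1 = l2"
  proof (intro ballI)
    fix l1 l2 :: "'a pt set" assume a1: "l1 \<in> UGamma_lines" and a2: "l2 \<in> UGamma_lines"
    obtain h1 where h1: "h1 \<in> Gq" "h1 ` l0 = l1" using UG_orbit[OF two a1] by blast
    obtain h2 where h2: "h2 \<in> Gq" "h2 ` l0 = l2" using UG_orbit[OF two a2] by blast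
    obtain h1' where h1': "h1' \<in> Gq" "\<forall>S. h1' (h1 S) = Nm S" using Gq_inv[OF h1(1)] by blast
    have e1: "h1' ` l1 = l0" unfolding h1(2)[symmetric] image_image h1'(2)[rule_format] Nl0 ..
    have "(h2 \<circ> h1') ` l1 = l2" by (simp only: image_comp[symmetric] e1 h2(2))
    then have "act_line (h2 \<circ> h1') l1 = l2" unfolding act_line_def .
    then show "\<exists>g\<in>Gq. act_line g l1 = l2" using Gq_comp[OF h2(1) h1'(1)] by (intro bexI)
  qed
  have P4: "\<forall>l\<in>(UGamma_lines :: 'a pt set set). card (stabilizer l) = CARD('a) - 1"
  proof
    fix l :: "'a pt set" assume "l \<in> UGamma_lines"
    then obtain h where h: "h \<in> Gq" "h ` l0 = l" using UG_orbit[OF two] by blast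
    show "card (stabilizer l) = CARD('a) - 1"
      using card_stab_conj[OF h(1)] card_stab_l0[OF two] unfolding h(2) by simp
  qed
  have P5: "line_through (vec4 0 0 0 1) (vec4 (0::'a) 1 0 0) \<in> UGamma_lines" unfolding L0 by (rule l0_UG)
  have P6: "\<forall>g\<in>stabilizer (line_through (vec4 0 0 0 1) (vec4 (0::'a) 1 0 0)).
         \<exists>d::'a. d \<noteq> 0 \<and>
           g = proj_map (mat4 (vec4 1 0 0 0) (vec4 0 d 0 0) (vec4 0 0 (d^2) 0) (vec4 0 0 0 (d^3)))"
    unfolding L0 stab_l0[OF two] Dg_def by blast
  show ?thesis using P1 P2 P3 P4 P5 P6 by (intro conjI)
qed


end
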